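(* Let $R$ be a dataset of size $n$, $R'=R\cup\{z_{n+1}\}$, and suppose $\hat F_R$ is $\lambda_R$-strongly convex and $\beta_R$-smooth on a closed convex set $\mathcal{W}$ and $f$ is $L$-Lipschitz. Consider Descent-to-Delete: starting from $w'_0=w_{R'}=\arg\min_{w\in\mathcal{W}}\hat F_{R'}(w)$, run $I$ steps $w'_t=\mathrm{Proj}_{\mathcal{W}}(w'_{t-1}-\eta\nabla\hat F_R(w'_{t-1}))$ with $\eta=\frac{2}{\lambda_R+\beta_R}$, and output $w'_I+\nu$ with $\nu\sim\mathcal{N}(0,\sigma^2I_d)$; when no deletion is requested on $R$, output $w_R+\nu$ with $w_R=\arg\min_{w\in\mathcal{W}}\hat F_R(w)$ and $\nu\sim\mathcal{N}(0,\sigma^2I_d)$. Then for any $\sigma>0$ and $\varepsilon,\delta\in(0,1)$, if $I\ge I_R(\varepsilon,\delta,\sigma)$ where $$I_R(\varepsilon,\delta,\sigma):=\left\lceil\frac{\ln\!\big(\frac{L}{n\lambda_R\sigma\, b(\varepsilon,\delta)}\big)}{\ln(1/\gamma_R)}\right\rceil,\qquad b(\varepsilon,\delta)=\sqrt{2\log(1/\delta)+2\varepsilon}-\sqrt{2\log(1/\delta)},$$ the two outputs are $(\varepsilon,\delta)$-indistinguishable, i.e. the algorithm satisfies $(\varepsilon,\delta)$-unlearning.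
   Context: $f:\mathcal{W}\times\mathcal{Z}\to\mathbb{R}$ is differentiable and $L$-Lipschitz in $w$ uniformly over $z$. For a dataset $S$, $\hat F_S(w)=\frac{1}{|S|}\sum_{z\in S}f(w,z)$. $\hat F_R$ is $\lambda_R$-strongly convex if $\hat F_R(w)-\hat F_R(w')\ge\langle\nabla\hat F_R(w'),w-w'\rangle+\frac{\lambda_R}{2}\|w-w'\|^2$, and $\beta_R$-smooth if $\|\nabla\hat F_R(w)-\nabla\hat F_R(w')\|\le\beta_R\|w-w'\|$, for all $w,w'\in\mathcal{W}$. $\kappa_R=\beta_R/\lambda_R$ and $\gamma_R=\frac{\kappa_R-1}{\kappa_R+1}$. $\mathrm{Proj}_{\mathcal{W}}$ is Euclidean projection. Random variables $X,Y$ are $(\varepsilon,\delta)$-indistinguishable if for all measurable $W$, $P(X\in W)\le e^\varepsilon P(Y\in W)+\delta$ and symmetrically. *)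

theory Defs
  imports "HOL-Analysis.Analysis" "HOL-Probability.Probability"
begin

definition emp_loss :: "('a \<Rightarrow> 'z \<Rightarrow> real) \<Rightarrow> 'z list \<Rightarrow> 'a \<Rightarrow> real" where
  "emp_loss f S w = (\<Sum>z\<leftarrow>S. f w z) / real (length S)"

definition grad :: "('a::real_inner \<Rightarrow> real) \<Rightarrow> 'a \<Rightarrow> 'a" where
  "grad F w = (THE D. GDERIV F w :> D)"

definition strongly_convex_on :: "'a::real_inner set \<Rightarrow> real \<Rightarrow> ('a \<Rightarrow> real) \<Rightarrow> bool" where
  "strongly_convex_on W lam F \<longleftrightarrow>
     (\<forall>w\<in>W. \<forall>w'\<in>W. F w - F w' \<ge> inner (grad F w') (w - w') + lam / 2 * (norm (w - w'))\<^sup>2)"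

definition smooth_on :: "'a::real_inner set \<Rightarrow> real \<Rightarrow> ('a \<Rightarrow> real) \<Rightarrow> bool" where
  "smooth_on W bet F \<longleftrightarrow>
     (\<forall>w\<in>W. \<forall>w'\<in>W. norm (grad F w - grad F w') \<le> bet * norm (w - w'))"

definition proj_gd :: "'a::euclidean_space set \<Rightarrow> ('a \<Rightarrow> 'a) \<Rightarrow> real \<Rightarrow> 'a \<Rightarrow> nat \<Rightarrow> 'a" where
  "proj_gd W g eta w0 t = ((\<lambda>w. closest_point W (w - eta *\<^sub>R g w)) ^^ t) w0"

definition gaussian_iso :: "real \<Rightarrow> 'a::euclidean_space measure" where
  "gaussian_iso \<sigma> = density lborel (\<lambda>x. ennreal (\<Prod>b\<in>Basis. normal_density 0 \<sigma> (inner x b)))"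

definition gauss_output :: "real \<Rightarrow> 'a::euclidean_space \<Rightarrow> 'a measure" where
  "gauss_output \<sigma> c = distr (gaussian_iso \<sigma>) borel (\<lambda>\<nu>. c + \<nu>)"

definition indistinguishable :: "real \<Rightarrow> real \<Rightarrow> 'a measure \<Rightarrow> 'a measure \<Rightarrow> bool" where
  "indistinguishable \<epsilon> \<delta> P Q \<longleftrightarrow> sets P = sets Q \<and>
     (\<forall>A\<in>sets P. measure P A \<le> exp \<epsilon> * measure Q A + \<delta> \<and> measure Q A \<le> exp \<epsilon> * measure P A + \<delta>)"

definition b_eps_delta :: "real \<Rightarrow> real \<Rightarrow> real" where
  "b_eps_delta \<epsilon> \<delta> = sqrt (2 * ln (1 / \<delta>) + 2 * \<epsilon>) - sqrt (2 * ln (1 / \<delta>))"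

definition I_R :: "real \<Rightarrow> nat \<Rightarrow> real \<Rightarrow> real \<Rightarrow> real \<Rightarrow> real \<Rightarrow> real \<Rightarrow> int" where
  "I_R L n lam bet \<epsilon> \<delta> \<sigma> =
     (let \<kappa> = bet / lam; \<gamma> = (\<kappa> - 1) / (\<kappa> + 1) in
      \<lceil>ln (L / (real n * lam * \<sigma> * b_eps_delta \<epsilon> \<delta>)) / ln (1 / \<gamma>)\<rceil>)"

end

theory Submission
  imports Defs
begin

definition gp :: "real \<Rightarrow> 'a::euclidean_space \<Rightarrow> real" where
  "gp \<sigma> x = (\<Prod>b\<in>Basis. normal_density 0 \<sigma> (inner x b))"

lemma gp_closed:
  "gp \<sigma> (x::'a::euclidean_space) = (1 / sqrt (2 * pi * \<sigma>\<^sup>2)) ^ DIM('a) * exp (- (norm x)\<^sup>2 / (2 * \<sigma>\<^sup>2))"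
proof -
  have "gp \<sigma> x = (\<Prod>b\<in>(Basis::'a set). 1 / sqrt (2 * pi * \<sigma>\<^sup>2) * exp (- (inner x b)\<^sup>2 / (2 * \<sigma>\<^sup>2)))"
    unfolding gp_def normal_density_def by simp
  also have "\<dots> = (\<Prod>b\<in>(Basis::'a set). 1 / sqrt (2 * pi * \<sigma>\<^sup>2)) * (\<Prod>b\<in>(Basis::'a set). exp (- (inner x b)\<^sup>2 / (2 * \<sigma>\<^sup>2)))"
    by (rule prod.distrib)
  also have "(\<Prod>b\<in>(Basis::'a set). exp (- (inner x b)\<^sup>2 / (2 * \<sigma>\<^sup>2))) = exp (\<Sum>b\<in>(Basis::'a set). - (inner x b)\<^sup>2 / (2 * \<sigma>\<^sup>2))"
    by (simp add: exp_sum)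
  also have "(\<Sum>b\<in>(Basis::'a set). - (inner x b)\<^sup>2 / (2 * \<sigma>\<^sup>2)) = - (\<Sum>b\<in>(Basis::'a set). (inner x b)\<^sup>2) / (2 * \<sigma>\<^sup>2)"
    by (simp add: sum_divide_distrib sum_negf)
  also have "(\<Sum>b\<in>(Basis::'a set). (inner x b)\<^sup>2) = (norm x)\<^sup>2"
  proof -
    have "(norm x)\<^sup>2 = inner x x" by (rule power2_norm_eq_inner)
    also have "inner x x = (\<Sum>b\<in>(Basis::'a set). inner x b * inner x b)" by (rule euclidean_inner)
    finally show ?thesis by (simp add: power2_eq_square)
  qed
  finally show ?thesis by simp
qed

lemma gp_nonneg: "\<sigma> > 0 \<Longrightarrow> 0 \<le> gp \<sigma> x"
  unfolding gp_def by (simp add: prod_nonneg)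

lemma gp_measurable[measurable]: "gp \<sigma> \<in> borel_measurable borel"
  unfolding gp_def by measurable

lemma nn_integral_gp: assumes "\<sigma> > 0"
  shows "(\<integral>\<^sup>+x. ennreal (gp \<sigma> (x::'a::euclidean_space)) \<partial>lborel) = 1"
proof -
  have "(\<integral>\<^sup>+x. ennreal (gp \<sigma> (x::'a)) \<partial>lborel) = (\<integral>\<^sup>+x. (\<Prod>b\<in>Basis. (\<lambda>b y. ennreal (normal_density 0 \<sigma> y)) b ((x::'a) \<bullet> b)) \<partial>lborel)"
    unfolding gp_def by (subst prod_ennreal) auto
  also have "\<dots> = (\<Prod>b\<in>(Basis::'a set). (\<integral>\<^sup>+y. ennreal (normal_density 0 \<sigma> y) \<partial>lborel))"
    by (rule nn_integral_lborel_prod) auto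
  also have "(\<integral>\<^sup>+y. ennreal (normal_density 0 \<sigma> y) \<partial>lborel) = 1"
    using assms by (subst nn_integral_eq_integral) auto
  finally show ?thesis by simp
qed

lemma nn_integral_translate:
  fixes c :: "'a::euclidean_space"
  assumes [measurable]: "g \<in> borel_measurable borel"
  shows "(\<integral>\<^sup>+\<nu>. g (c + \<nu>) \<partial>lborel) = (\<integral>\<^sup>+x. g x \<partial>lborel)"
proof -
  have "(\<integral>\<^sup>+x. g x \<partial>lborel) = (\<integral>\<^sup>+x. g x \<partial>(distr lborel borel ((+) c)))"
    by (simp add: lborel_distr_plus)
  also have "\<dots> = (\<integral>\<^sup>+\<nu>. g (c + \<nu>) \<partial>lborel)"
    by (rule nn_integral_distr) auto
  finally show ?thesis by simp
qed

lemma emeasure_gauss_output: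
  fixes c :: "'a::euclidean_space"
  assumes A: "A \<in> sets borel"
  shows "emeasure (gauss_output \<sigma> c) A = (\<integral>\<^sup>+\<nu>. ennreal (gp \<sigma> \<nu>) * indicator A (c + \<nu>) \<partial>lborel)"
proof -
  have "emeasure (gauss_output \<sigma> c) A = emeasure (gaussian_iso \<sigma>) ((+) c -` A)"
    unfolding gauss_output_def using A
    by (subst emeasure_distr) (auto simp: gaussian_iso_def)
  also have "\<dots> = (\<integral>\<^sup>+\<nu>. ennreal (gp \<sigma> \<nu>) * indicator ((+) c -` A) \<nu> \<partial>lborel)"
  proof -
    have "(+) c \<in> borel_measurable (borel::'a measure)" by measurable
    then have vA: "(+) c -` A \<in> sets (borel::'a measure)" using measurable_sets[of "(+) c" borel borel A] A by simp
    then show ?thesis unfolding gaussian_iso_def gp_def[symmetric] by (subst emeasure_density) auto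
  qed
  finally show ?thesis by (simp add: indicator_def)
qed

lemma prob_space_gauss_output:
  fixes c :: "'a::euclidean_space"
  assumes "\<sigma> > 0"
  shows "prob_space (gauss_output \<sigma> c)"
proof -
  have "prob_space (gaussian_iso \<sigma> :: 'a measure)"
    unfolding gaussian_iso_def gp_def[symmetric]
    by (rule prob_spaceI) (simp add: emeasure_density nn_integral_gp[OF assms])
  then show ?thesis unfolding gauss_output_def
    by (rule prob_space.prob_space_distr) (auto simp: gaussian_iso_def intro!: borel_measurable_continuous_onI continuous_intros)
qed

lemma gp_shift_le:
  fixes \<Delta> \<mu> :: "'a::euclidean_space"
  assumes "\<sigma> > 0" "s \<ge> 0" "inner \<mu> \<Delta> \<ge> 0"
  shows "gp \<sigma> (s *\<^sub>R \<Delta> + \<mu>) \<le> exp (- (s\<^sup>2 * (norm \<Delta>)\<^sup>2) / (2 * \<sigma>\<^sup>2)) * gp \<sigma> \<mu>"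
proof -
  have n: "(norm (s *\<^sub>R \<Delta> + \<mu>))\<^sup>2 = s\<^sup>2 * (norm \<Delta>)\<^sup>2 + 2 * s * inner \<mu> \<Delta> + (norm \<mu>)\<^sup>2"
    unfolding power2_norm_eq_inner by (simp add: inner_add inner_commute power2_eq_square algebra_simps)
  have "s\<^sup>2 * (norm \<Delta>)\<^sup>2 + (norm \<mu>)\<^sup>2 \<le> (norm (s *\<^sub>R \<Delta> + \<mu>))\<^sup>2"
    unfolding n using assms by simp
  then have "- (norm (s *\<^sub>R \<Delta> + \<mu>))\<^sup>2 / (2 * \<sigma>\<^sup>2) \<le> - (s\<^sup>2 * (norm \<Delta>)\<^sup>2) / (2 * \<sigma>\<^sup>2) + - (norm \<mu>)\<^sup>2 / (2 * \<sigma>\<^sup>2)"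
    using assms by (simp add: divide_simps)
  then have "exp (- (norm (s *\<^sub>R \<Delta> + \<mu>))\<^sup>2 / (2 * \<sigma>\<^sup>2)) \<le> exp (- (s\<^sup>2 * (norm \<Delta>)\<^sup>2) / (2 * \<sigma>\<^sup>2)) * exp (- (norm \<mu>)\<^sup>2 / (2 * \<sigma>\<^sup>2))"
    by (simp add: exp_add[symmetric])
  then show ?thesis unfolding gp_closed
    by (simp add: mult.left_commute mult_left_mono)
qed

lemma gp_tail:
  fixes \<Delta> :: "'a::euclidean_space"
  assumes "\<sigma> > 0" "s \<ge> 0"
  shows "(\<integral>\<^sup>+\<nu>. ennreal (gp \<sigma> \<nu>) * indicator {\<nu>. s * (norm \<Delta>)\<^sup>2 < inner \<nu> \<Delta>} \<nu> \<partial>lborel)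
     \<le> ennreal (exp (- (s\<^sup>2 * (norm \<Delta>)\<^sup>2) / (2 * \<sigma>\<^sup>2)))"
proof -
  let ?B = "{\<nu>::'a. s * (norm \<Delta>)\<^sup>2 < inner \<nu> \<Delta>}"
  let ?E = "exp (- (s\<^sup>2 * (norm \<Delta>)\<^sup>2) / (2 * \<sigma>\<^sup>2))"
  have Bm: "?B \<in> sets borel"
    by (rule borel_open, rule open_Collect_less) (auto intro: continuous_intros)
  have "(\<integral>\<^sup>+\<nu>. ennreal (gp \<sigma> \<nu>) * indicator ?B \<nu> \<partial>lborel)
      = (\<integral>\<^sup>+\<mu>. ennreal (gp \<sigma> (s *\<^sub>R \<Delta> + \<mu>)) * indicator ?B (s *\<^sub>R \<Delta> + \<mu>) \<partial>lborel)"
    by (rule nn_integral_translate[symmetric, where g = "\<lambda>x. ennreal (gp \<sigma> x) * indicator ?B x"])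
       (use Bm in measurable)
  also have "\<dots> \<le> (\<integral>\<^sup>+\<mu>. ennreal ?E * ennreal (gp \<sigma> (\<mu>::'a)) \<partial>lborel)"
  proof (rule nn_integral_mono)
    fix \<mu> :: 'a
    show "ennreal (gp \<sigma> (s *\<^sub>R \<Delta> + \<mu>)) * indicator ?B (s *\<^sub>R \<Delta> + \<mu>) \<le> ennreal ?E * ennreal (gp \<sigma> \<mu>)"
    proof (cases "inner \<mu> \<Delta> > 0")
      case True
      have "gp \<sigma> (s *\<^sub>R \<Delta> + \<mu>) \<le> ?E * gp \<sigma> \<mu>"
        using gp_shift_le[OF assms, of \<mu> \<Delta>] True by simp
      then have "ennreal (gp \<sigma> (s *\<^sub>R \<Delta> + \<mu>)) \<le> ennreal ?E * ennreal (gp \<sigma> \<mu>)"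
        by (simp add: ennreal_mult'[symmetric] ennreal_leI)
      then show ?thesis
        by (simp add: indicator_def)
    next
      case False
      have "s *\<^sub>R \<Delta> + \<mu> \<notin> ?B"
        using False by (simp add: inner_add_left power2_norm_eq_inner)
      then show ?thesis by simp
    qed
  qed
  also have "\<dots> = ennreal ?E * (\<integral>\<^sup>+\<mu>. ennreal (gp \<sigma> (\<mu>::'a)) \<partial>lborel)"
    by (rule nn_integral_cmult) measurable
  also have "\<dots> = ennreal ?E" using nn_integral_gp[OF assms(1), where 'a='a] by simp
  finally show ?thesis .
qed

lemma emeasure_gauss_output2:
  fixes c :: "'a::euclidean_space"
  assumes A: "A \<in> sets borel"
  shows "emeasure (gauss_output \<sigma> c) A = (\<integral>\<^sup>+x. ennreal (gp \<sigma> (x - c)) * indicator A x \<partial>lborel)"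
  unfolding emeasure_gauss_output[OF A]
  using nn_integral_translate[of "\<lambda>x. ennreal (gp \<sigma> (x - c)) * indicator A x" c] A
  by simp

lemma gp_ind_meas:
  fixes c :: "'a::euclidean_space"
  assumes "A \<in> sets borel"
  shows "(\<lambda>x. ennreal (gp \<sigma> (x - c)) * indicator A x) \<in> borel_measurable lborel"
proof -
  have [measurable]: "A \<in> sets lborel" using assms by simp
  show ?thesis by measurable
qed

lemma gp_ind_meas2:
  fixes c :: "'a::euclidean_space"
  assumes [measurable]: "A \<in> sets borel"
  shows "(\<lambda>x. ennreal (gp \<sigma> (x - c)) * indicator A x) \<in> borel_measurable borel"
    "(\<lambda>x. ennreal K * (ennreal (gp \<sigma> (x - c)) * indicator A x)) \<in> borel_measurable borel"
proof -
  have m: "(\<lambda>x. ennreal (gp \<sigma> (x - c)) * indicator A x) \<in> borel_measurable borel"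
  proof (intro borel_measurable_times_ennreal borel_measurable_indicator assms)
    have "(\<lambda>x. gp \<sigma> (x - c)) \<in> borel_measurable borel" by measurable
    then show "(\<lambda>x. ennreal (gp \<sigma> (x - c))) \<in> borel_measurable borel" by simp
  qed
  show "(\<lambda>x. ennreal (gp \<sigma> (x - c)) * indicator A x) \<in> borel_measurable borel" by (rule m)
  show "(\<lambda>x. ennreal K * (ennreal (gp \<sigma> (x - c)) * indicator A x)) \<in> borel_measurable borel"
    using m by (intro borel_measurable_times_ennreal) auto
qed

lemma b_arith:
  fixes a \<sigma> \<epsilon> \<delta> s :: real
  assumes "\<sigma> > 0" "a > 0" "\<epsilon> > 0" "0 < \<delta>" "\<delta> < 1" "a \<le> \<sigma> * b_eps_delta \<epsilon> \<delta>"
    and s_def: "s = (\<sigma>\<^sup>2 * \<epsilon> - a\<^sup>2 / 2) / a\<^sup>2"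
  shows "s \<ge> 0" "exp (- (s\<^sup>2 * a\<^sup>2) / (2 * \<sigma>\<^sup>2)) \<le> \<delta>"
proof -
  define c where "c = sqrt (2 * ln (1 / \<delta>))"
  define r where "r = a / \<sigma>"
  have l: "ln (1 / \<delta>) > 0" using assms(4,5) by (subst ln_div) auto
  have c0: "c \<ge> 0" unfolding c_def using l by simp
  have cc: "c\<^sup>2 = 2 * ln (1 / \<delta>)" unfolding c_def using l by simp
  have r0: "r > 0" unfolding r_def using assms(1,2) by simp
  have "r \<le> b_eps_delta \<epsilon> \<delta>" unfolding r_def using divide_right_mono[OF assms(6), of \<sigma>] assms(1) by simp
  moreover have "b_eps_delta \<epsilon> \<delta> = sqrt (c\<^sup>2 + 2 * \<epsilon>) - c" unfolding b_eps_delta_def cc unfolding c_def by simp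
  ultimately have rc: "r + c \<le> sqrt (c\<^sup>2 + 2 * \<epsilon>)" by linarith
  have "(r + c)\<^sup>2 \<le> (sqrt (c\<^sup>2 + 2 * \<epsilon>))\<^sup>2"
    by (rule power_mono[OF rc]) (use r0 c0 in linarith)
  also have "\<dots> = c\<^sup>2 + 2 * \<epsilon>" using assms(3) by simp
  finally have "(r + c)\<^sup>2 \<le> c\<^sup>2 + 2 * \<epsilon>" .
  then have "r\<^sup>2 + 2 * r * c \<le> 2 * \<epsilon>" by (simp add: power2_eq_square algebra_simps)
  then have "c * (2 * r) \<le> 2 * \<epsilon> - r\<^sup>2" by (simp add: algebra_simps)
  then have "c \<le> (2 * \<epsilon> - r\<^sup>2) / (2 * r)" using r0 by (simp add: pos_le_divide_eq)
  also have "(2 * \<epsilon> - r\<^sup>2) / (2 * r) = \<epsilon> / r - r / 2" using r0 by (simp add: field_simps power2_eq_square)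
  finally have key: "c \<le> \<epsilon> / r - r / 2" .
  have sa: "s * (a / \<sigma>) = \<epsilon> / r - r / 2"
    unfolding s_def r_def using assms(1,2) by (simp add: field_simps power2_eq_square)
  have ge: "s * (a / \<sigma>) \<ge> c" using key sa by linarith
  then have "s * (a / \<sigma>) \<ge> 0" using c0 by linarith
  moreover have "a / \<sigma> > 0" using assms(1,2) by simp
  ultimately have "s * (a / \<sigma>) / (a / \<sigma>) \<ge> 0" by (rule divide_nonneg_pos)
  then show "s \<ge> 0" using assms(1,2) by simp
  have "c\<^sup>2 \<le> (s * (a / \<sigma>))\<^sup>2" using ge c0 by (rule power_mono)
  also have "(s * (a / \<sigma>))\<^sup>2 = s\<^sup>2 * a\<^sup>2 / \<sigma>\<^sup>2" by (simp add: power_divide power_mult_distrib)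
  finally have "2 * ln (1 / \<delta>) \<le> s\<^sup>2 * a\<^sup>2 / \<sigma>\<^sup>2" using cc by simp
  then have "ln (1 / \<delta>) \<le> (s\<^sup>2 * a\<^sup>2) / (2 * \<sigma>\<^sup>2)" by simp
  then have "exp (- (s\<^sup>2 * a\<^sup>2) / (2 * \<sigma>\<^sup>2)) \<le> exp (- ln (1 / \<delta>))" by simp
  also have "\<dots> = \<delta>" using assms(4) by (simp add: ln_div)
  finally show "exp (- (s\<^sup>2 * a\<^sup>2) / (2 * \<sigma>\<^sup>2)) \<le> \<delta>" .
qed

lemma gauss_mech:
  fixes c1 c2 :: "'a::euclidean_space"
  assumes \<sigma>: "\<sigma> > 0" and \<epsilon>: "\<epsilon> > 0" and \<delta>: "0 < \<delta>" "\<delta> < 1"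
    and a: "norm (c1 - c2) \<le> \<sigma> * b_eps_delta \<epsilon> \<delta>" and A: "A \<in> sets borel"
  shows "measure (gauss_output \<sigma> c1) A \<le> exp \<epsilon> * measure (gauss_output \<sigma> c2) A + \<delta>"
proof -
  interpret P1: prob_space "gauss_output \<sigma> c1" by (rule prob_space_gauss_output[OF \<sigma>])
  interpret P2: prob_space "gauss_output \<sigma> c2" by (rule prob_space_gauss_output[OF \<sigma>])
  show ?thesis
  proof (cases "c1 = c2")
    case True
    have "measure (gauss_output \<sigma> c1) A \<le> exp \<epsilon> * measure (gauss_output \<sigma> c1) A"
      using \<epsilon> by (simp add: mult_le_cancel_right1)
    then show ?thesis using True \<delta> by simp
  next
    case False
    define \<Delta> where "\<Delta> = c1 - c2"
    define a where "a = norm \<Delta>"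
    define s where "s = (\<sigma>\<^sup>2 * \<epsilon> - a\<^sup>2 / 2) / a\<^sup>2"
    have a0: "a > 0" unfolding a_def \<Delta>_def using False by simp
    have a': "a \<le> \<sigma> * b_eps_delta \<epsilon> \<delta>" using a unfolding a_def \<Delta>_def .
    note ba = b_arith[OF \<sigma> a0 \<epsilon> \<delta> a' s_def]
    have s0: "s \<ge> 0" by (rule ba(1))
    have sd: "exp (- (s\<^sup>2 * a\<^sup>2) / (2 * \<sigma>\<^sup>2)) \<le> \<delta>" by (rule ba(2))
    define Bad where "Bad = {x::'a. 2 * \<sigma>\<^sup>2 * \<epsilon> < (norm (x - c2))\<^sup>2 - (norm (x - c1))\<^sup>2}"
    have Bm: "Bad \<in> sets borel"
      unfolding Bad_def by (rule borel_open, rule open_Collect_less) (auto intro!: continuous_intros)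
    have pt: "ennreal (gp \<sigma> (x - c1)) * indicator A x
        \<le> ennreal (exp \<epsilon>) * (ennreal (gp \<sigma> (x - c2)) * indicator A x) + ennreal (gp \<sigma> (x - c1)) * indicator Bad x" for x
    proof (cases "x \<in> Bad")
      case True
      then show ?thesis by (simp add: indicator_def)
    next
      case False
      then have "(norm (x - c2))\<^sup>2 - (norm (x - c1))\<^sup>2 \<le> 2 * \<sigma>\<^sup>2 * \<epsilon>" unfolding Bad_def by simp
      then have "- (norm (x - c1))\<^sup>2 / (2 * \<sigma>\<^sup>2) \<le> \<epsilon> + - (norm (x - c2))\<^sup>2 / (2 * \<sigma>\<^sup>2)"
        using \<sigma> by (simp add: field_simps)
      then have "exp (- (norm (x - c1))\<^sup>2 / (2 * \<sigma>\<^sup>2)) \<le> exp \<epsilon> * exp (- (norm (x - c2))\<^sup>2 / (2 * \<sigma>\<^sup>2))"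
        by (simp add: exp_add[symmetric])
      then have "gp \<sigma> (x - c1) \<le> exp \<epsilon> * gp \<sigma> (x - c2)"
      proof -
        assume h: "exp (- (norm (x - c1))\<^sup>2 / (2 * \<sigma>\<^sup>2)) \<le> exp \<epsilon> * exp (- (norm (x - c2))\<^sup>2 / (2 * \<sigma>\<^sup>2))"
        have "(1 / sqrt (2 * pi * \<sigma>\<^sup>2)) ^ DIM('a) \<ge> 0" by simp
        from mult_left_mono[OF h this] show ?thesis unfolding gp_closed by (simp add: mult.left_commute)
      qed
      then have "ennreal (gp \<sigma> (x - c1)) \<le> ennreal (exp \<epsilon>) * ennreal (gp \<sigma> (x - c2))"
        by (simp add: ennreal_mult'[symmetric] ennreal_leI)
      then show ?thesis
        by (simp add: indicator_def)
    qed
    have "emeasure (gauss_output \<sigma> c1) Bad = (\<integral>\<^sup>+\<nu>. ennreal (gp \<sigma> \<nu>) * indicator {\<nu>. s * (norm \<Delta>)\<^sup>2 < inner \<nu> \<Delta>} \<nu> \<partial>lborel)"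
      unfolding emeasure_gauss_output[OF Bm]
    proof (rule nn_integral_cong)
      fix \<nu> :: 'a
      have e1: "(norm (c1 + \<nu> - c2))\<^sup>2 - (norm (c1 + \<nu> - c1))\<^sup>2 = 2 * inner \<nu> \<Delta> + a\<^sup>2"
        unfolding a_def \<Delta>_def power2_norm_eq_inner
        by (simp add: inner_add inner_diff inner_commute algebra_simps)
      have sa2: "s * (norm \<Delta>)\<^sup>2 = \<sigma>\<^sup>2 * \<epsilon> - a\<^sup>2 / 2" unfolding s_def a_def[symmetric] using a0 by simp
      have "(c1 + \<nu> \<in> Bad) = (2 * \<sigma>\<^sup>2 * \<epsilon> < 2 * inner \<nu> \<Delta> + a\<^sup>2)"
        unfolding Bad_def mem_Collect_eq e1 by simp
      also have "\<dots> = (s * (norm \<Delta>)\<^sup>2 < inner \<nu> \<Delta>)" unfolding sa2 by linarith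
      finally have "(c1 + \<nu> \<in> Bad) = (s * (norm \<Delta>)\<^sup>2 < inner \<nu> \<Delta>)" .
      then show "ennreal (gp \<sigma> \<nu>) * indicator Bad (c1 + \<nu>) = ennreal (gp \<sigma> \<nu>) * indicator {\<nu>. s * (norm \<Delta>)\<^sup>2 < inner \<nu> \<Delta>} \<nu>"
        by (simp add: indicator_def)
    qed
    also have "\<dots> \<le> ennreal (exp (- (s\<^sup>2 * (norm \<Delta>)\<^sup>2) / (2 * \<sigma>\<^sup>2)))"
      by (rule gp_tail[OF \<sigma> s0])
    also have "\<dots> \<le> ennreal \<delta>" using sd unfolding a_def by (simp add: ennreal_leI)
    finally have bad: "emeasure (gauss_output \<sigma> c1) Bad \<le> ennreal \<delta>" .
    have "emeasure (gauss_output \<sigma> c1) A = (\<integral>\<^sup>+x. ennreal (gp \<sigma> (x - c1)) * indicator A x \<partial>lborel)"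
      by (rule emeasure_gauss_output2[OF A])
    also have "\<dots> \<le> (\<integral>\<^sup>+x. ennreal (exp \<epsilon>) * (ennreal (gp \<sigma> (x - c2)) * indicator A x) + ennreal (gp \<sigma> (x - c1)) * indicator Bad x \<partial>lborel)"
      by (rule nn_integral_mono) (rule pt)
    also have "\<dots> = (\<integral>\<^sup>+x. ennreal (exp \<epsilon>) * (ennreal (gp \<sigma> (x - c2)) * indicator A x) \<partial>lborel) + (\<integral>\<^sup>+x. ennreal (gp \<sigma> (x - c1)) * indicator Bad x \<partial>lborel)"
      by (rule nn_integral_add) (auto intro!: gp_ind_meas2 A Bm)
    also have "\<dots> = ennreal (exp \<epsilon>) * emeasure (gauss_output \<sigma> c2) A + emeasure (gauss_output \<sigma> c1) Bad"
      unfolding emeasure_gauss_output2[OF A] emeasure_gauss_output2[OF Bm]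
      by (subst nn_integral_cmult) (auto intro!: gp_ind_meas2 A)
    also have "\<dots> \<le> ennreal (exp \<epsilon>) * emeasure (gauss_output \<sigma> c2) A + ennreal \<delta>"
      using bad by (rule add_left_mono)
    finally have H: "emeasure (gauss_output \<sigma> c1) A \<le> ennreal (exp \<epsilon>) * emeasure (gauss_output \<sigma> c2) A + ennreal \<delta>" .
    have "ennreal (measure (gauss_output \<sigma> c1) A) \<le> ennreal (exp \<epsilon>) * ennreal (measure (gauss_output \<sigma> c2) A) + ennreal \<delta>"
      using H by (simp only: P1.emeasure_eq_measure P2.emeasure_eq_measure)
    also have "\<dots> = ennreal (exp \<epsilon> * measure (gauss_output \<sigma> c2) A) + ennreal \<delta>"
      by (subst ennreal_mult) auto
    also have "\<dots> = ennreal (exp \<epsilon> * measure (gauss_output \<sigma> c2) A + \<delta>)"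
      by (rule ennreal_plus[symmetric]) (use \<delta> in auto)
    finally have F: "ennreal (measure (gauss_output \<sigma> c1) A) \<le> ennreal (exp \<epsilon> * measure (gauss_output \<sigma> c2) A + \<delta>)" .
    have X0: "0 \<le> exp \<epsilon> * measure (gauss_output \<sigma> c2) A + \<delta>"
      using \<delta> by (intro add_nonneg_nonneg mult_nonneg_nonneg) auto
    show ?thesis using F by (simp only: ennreal_le_iff[OF X0])
  qed
qed

lemma grad_eq:
  fixes F :: "'a::real_inner \<Rightarrow> real"
  assumes "GDERIV F w :> D"
  shows "grad F w = D"
  unfolding grad_def
proof (rule the_equality)
  show "GDERIV F w :> D" by fact
  fix D' assume "GDERIV F w :> D'"
  then have "(\<lambda>h. inner h D') = (\<lambda>h. inner h D)"
    using assms unfolding gderiv_def by (rule has_derivative_unique)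
  then have "inner (D' - D) D' = inner (D' - D) D" by metis
  then have "inner (D' - D) (D' - D) = 0" by (simp add: inner_diff_right)
  then show "D' = D" by simp
qed

lemma differentiable_gderiv:
  fixes F :: "'a::euclidean_space \<Rightarrow> real"
  assumes "F differentiable (at w)"
  shows "GDERIV F w :> grad F w"
proof -
  obtain F' where d: "(F has_derivative F') (at w)" using assms unfolding differentiable_def by blast
  then have lin: "linear F'" by (rule has_derivative_linear)
  define D where "D = (\<Sum>b\<in>(Basis::'a set). F' b *\<^sub>R b)"
  have "F' h = inner h D" for h
  proof -
    have "F' h = F' (\<Sum>b\<in>Basis. inner h b *\<^sub>R b)" by (simp add: euclidean_representation)
    also have "\<dots> = (\<Sum>b\<in>Basis. inner h b * F' b)" by (simp add: linear_sum[OF lin] linear_cmul[OF lin])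
    also have "\<dots> = inner h D" unfolding D_def by (simp add: inner_sum_right mult.commute)
    finally show ?thesis .
  qed
  then have "F' = (\<lambda>h. inner h D)" by auto
  then have "GDERIV F w :> D" using d unfolding gderiv_def by simp
  then show ?thesis using grad_eq by metis
qed

lemma differentiable_sum_list:
  assumes "\<forall>z\<in>set S. (\<lambda>w. f w z) differentiable (at w0)"
  shows "(\<lambda>w. \<Sum>z\<leftarrow>S. (f w z :: real)) differentiable (at w0)"
  using assms
proof (induction S)
  case Nil
  then show ?case by simp
next
  case (Cons a S)
  then show ?case by (simp add: differentiable_add)
qed

lemma emp_loss_differentiable:
  fixes f :: "'a::euclidean_space \<Rightarrow> 'z \<Rightarrow> real"
  assumes "\<forall>z. (\<lambda>w. f w z) differentiable (at w0)"
  shows "emp_loss f S differentiable (at w0)"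
proof -
  have "(\<lambda>w. \<Sum>z\<leftarrow>S. f w z) differentiable (at w0)"
    using assms by (intro differentiable_sum_list) auto
  then have "(\<lambda>w. (\<Sum>z\<leftarrow>S. f w z) * (1 / real (length S))) differentiable (at w0)"
    by (intro differentiable_mult differentiable_const) auto
  moreover have "emp_loss f S = (\<lambda>w. (\<Sum>z\<leftarrow>S. f w z) * (1 / real (length S)))"
    unfolding emp_loss_def by auto
  ultimately show ?thesis by simp
qed

lemma line_deriv:
  fixes F :: "'a::real_inner \<Rightarrow> real"
  assumes "(F has_derivative (\<lambda>h. inner h G)) (at (x + t *\<^sub>R v))"
  shows "((\<lambda>s. F (x + s *\<^sub>R v)) has_real_derivative (inner v G)) (at t)"
proof -
  have l: "((\<lambda>s. x + s *\<^sub>R v) has_derivative (\<lambda>s. s *\<^sub>R v)) (at t)"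
    by (auto intro!: derivative_eq_intros)
  have "((\<lambda>s. F (x + s *\<^sub>R v)) has_derivative (\<lambda>s. inner (s *\<^sub>R v) G)) (at t)"
    using has_derivative_compose[OF l assms] by simp
  then show ?thesis unfolding has_field_derivative_def
    by (rule has_derivative_eq_rhs) (auto simp: fun_eq_iff mult.commute)
qed

lemma deriv_dir_ge:
  fixes \<phi> :: "'a::real_normed_vector \<Rightarrow> real"
  assumes d: "(\<phi> has_derivative \<phi>') (at w0)"
    and h: "\<And>t. 0 < t \<Longrightarrow> t < 1 \<Longrightarrow> c * t \<le> \<phi> (w0 + t *\<^sub>R v) - \<phi> w0"
  shows "c \<le> \<phi>' v"
proof (rule ccontr)
  assume "\<not> c \<le> \<phi>' v"
  define \<psi> where "\<psi> = (\<lambda>s. \<phi> (w0 + s *\<^sub>R v) - c * s)"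
  have l: "((\<lambda>s. w0 + s *\<^sub>R v) has_derivative (\<lambda>s. s *\<^sub>R v)) (at 0)"
    by (auto intro!: derivative_eq_intros)
  have lin: "linear \<phi>'" using d by (rule has_derivative_linear)
  have "((\<lambda>s. \<phi> (w0 + s *\<^sub>R v)) has_derivative (\<lambda>s. \<phi>' (s *\<^sub>R v))) (at 0)"
    using has_derivative_compose[OF l] d by simp
  then have "((\<lambda>s. \<phi> (w0 + s *\<^sub>R v)) has_real_derivative \<phi>' v) (at 0)"
    unfolding has_field_derivative_def
    by (rule has_derivative_eq_rhs) (auto simp: fun_eq_iff linear_cmul[OF lin] mult.commute)
  then have "(\<psi> has_real_derivative (\<phi>' v - c)) (at 0)"
    unfolding \<psi>_def by (auto intro!: derivative_eq_intros)
  moreover have "\<phi>' v - c < 0" using \<open>\<not> c \<le> \<phi>' v\<close> by simp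
  ultimately obtain e where e: "e > 0" "\<And>h. h > 0 \<Longrightarrow> h < e \<Longrightarrow> \<psi> 0 > \<psi> (0 + h)"
    using DERIV_neg_dec_right by blast
  define t where "t = min (e / 2) (1 / 2)"
  have t: "0 < t" "t < e" "t < 1" unfolding t_def using e by auto
  have "\<psi> 0 > \<psi> t" using e(2)[OF t(1,2)] by simp
  then have "\<phi> (w0 + t *\<^sub>R v) - \<phi> w0 < c * t" unfolding \<psi>_def by simp
  with h[OF t(1,3)] show False by simp
qed

lemma seg_in:
  fixes x y :: "'a::real_vector"
  assumes "convex W" "x \<in> W" "y \<in> W" "0 \<le> t" "t \<le> 1"
  shows "x + t *\<^sub>R (y - x) \<in> W"
proof -
  have "(1 - t) *\<^sub>R x + t *\<^sub>R y \<in> W" using assms unfolding convex_alt by blast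
  moreover have "(1 - t) *\<^sub>R x + t *\<^sub>R y = x + t *\<^sub>R (y - x)" by (simp add: algebra_simps)
  ultimately show ?thesis by simp
qed

lemma upper_quad:
  fixes F :: "'a::real_inner \<Rightarrow> real"
  assumes cW: "convex W" and x: "x \<in> W" and y: "y \<in> W"
    and der: "\<forall>w\<in>W. (F has_derivative (\<lambda>h. inner h (g w))) (at w)"
    and sm: "\<forall>w\<in>W. \<forall>w'\<in>W. norm (g w - g w') \<le> bet * norm (w - w')"
  shows "F y - F x - inner (g x) (y - x) \<le> bet / 2 * (norm (y - x))\<^sup>2"
proof -
  define v where "v = y - x"
  define \<psi> where "\<psi> = (\<lambda>t. F (x + t *\<^sub>R v) - t * inner v (g x) - bet / 2 * t\<^sup>2 * (norm v)\<^sup>2)"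
  have "\<psi> 1 \<le> \<psi> 0"
  proof (rule DERIV_nonpos_imp_nonincreasing[of 0 1 \<psi>])
    fix t :: real assume t: "0 \<le> t" "t \<le> 1"
    define p where "p = x + t *\<^sub>R v"
    have p: "p \<in> W" unfolding p_def v_def using seg_in[OF cW x y t] .
    have dF: "((\<lambda>s. F (x + s *\<^sub>R v)) has_real_derivative (inner v (g p))) (at t)"
      using line_deriv[of F "g p" x t v] der p unfolding p_def by simp
    have D: "(\<psi> has_real_derivative (inner v (g p) - inner v (g x) - bet / 2 * (2 * t) * (norm v)\<^sup>2)) (at t)"
      unfolding \<psi>_def by (rule derivative_eq_intros dF | simp)+
    have "inner v (g p) - inner v (g x) = inner v (g p - g x)" by (simp add: inner_diff_right)
    also have "\<dots> \<le> norm v * norm (g p - g x)" by (rule norm_cauchy_schwarz)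
    also have "\<dots> \<le> norm v * (bet * norm (p - x))" using sm p x by (simp add: mult_left_mono)
    also have "norm (p - x) = t * norm v" unfolding p_def using t by simp
    finally have "inner v (g p) - inner v (g x) - bet / 2 * (2 * t) * (norm v)\<^sup>2 \<le> 0"
      by (simp add: power2_eq_square algebra_simps)
    then show "\<exists>y. (\<psi> has_real_derivative y) (at t) \<and> y \<le> 0" using D by blast
  qed simp
  then show ?thesis unfolding \<psi>_def v_def by (simp add: inner_commute)
qed

lemma norm_sq_diff:
  fixes u n :: "'a::real_inner"
  shows "(norm (u - n))\<^sup>2 = (norm u)\<^sup>2 - 2 * inner u n + (norm n)\<^sup>2"
  unfolding power2_norm_eq_inner by (simp add: inner_diff inner_commute)

locale pgd_setting =
  fixes W :: "'a::euclidean_space set" and F :: "'a \<Rightarrow> real" and g :: "'a \<Rightarrow> 'a"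
    and lam bet :: real and a :: 'a
  assumes closedW: "closed W" and convexW: "convex W" and aW: "a \<in> W"
    and der: "\<forall>w\<in>W. (F has_derivative (\<lambda>h. inner h (g w))) (at w)"
    and sc: "\<forall>w\<in>W. \<forall>w'\<in>W. F w - F w' \<ge> inner (g w') (w - w') + lam / 2 * (norm (w - w'))\<^sup>2"
    and sm: "\<forall>w\<in>W. \<forall>w'\<in>W. norm (g w - g w') \<le> bet * norm (w - w')"
    and lam0: "0 < lam" and lambet: "lam < bet"
    and opt: "\<forall>y\<in>W. inner (g a) (y - a) \<ge> 0"
begin

definition AH where "AH = affine hull W"
definition V where "V = (+) (- a) ` AH"
definition gh where "gh w = (SOME y. y \<in> V \<and> (\<forall>v\<in>V. inner (g w - y) v = 0))"

lemma W_AH: "W \<subseteq> AH" unfolding AH_def by (rule hull_subset)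

lemma V_subspace: "subspace V"
  unfolding V_def AH_def
  by (rule affine_diffs_subspace[OF affine_affine_hull hull_inc[OF aW]])

lemma AH_V: "p \<in> AH \<Longrightarrow> -a + p \<in> V" unfolding V_def by blast

lemma AH_diff: "p \<in> AH \<Longrightarrow> q \<in> AH \<Longrightarrow> q - p \<in> V"
proof -
  assume "p \<in> AH" "q \<in> AH"
  then have "(-a + q) - (-a + p) \<in> V" by (intro subspace_diff[OF V_subspace] AH_V)
  then show "q - p \<in> V" by simp
qed

lemma AH_add: "p \<in> AH \<Longrightarrow> v \<in> V \<Longrightarrow> p + v \<in> AH"
proof -
  assume "p \<in> AH" "v \<in> V"
  then have "(-a + p) + v \<in> V" using AH_V subspace_add[OF V_subspace] by simp
  then obtain r where "r \<in> AH" "-a + p + v = -a + r" unfolding V_def by blast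
  moreover from this(2) have "p + v = r" by (simp add: add.assoc)
  ultimately show "p + v \<in> AH" by simp
qed

lemma W_diff: "x \<in> W \<Longrightarrow> y \<in> W \<Longrightarrow> y - x \<in> V"
  using AH_diff W_AH by (simp add: subset_iff)

lemma gh_prop: "gh w \<in> V \<and> (\<forall>v\<in>V. inner (g w - gh w) v = 0)"
proof -
  obtain y z where yz: "y \<in> span V" "\<And>v. v \<in> span V \<Longrightarrow> orthogonal z v" "g w = y + z"
    using orthogonal_subspace_decomp_exists[of V "g w"] by metis
  have sV: "span V = V" using V_subspace by (simp add: span_eq_iff)
  have "y \<in> V \<and> (\<forall>v\<in>V. inner (g w - y) v = 0)"
    using yz sV by (auto simp: orthogonal_def)
  then show ?thesis unfolding gh_def by (rule someI)
qed

lemma gh_V: "gh w \<in> V" using gh_prop by blast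

lemma gh_orth: "v \<in> V \<Longrightarrow> inner (g w - gh w) v = 0" using gh_prop by blast

lemma gh_inner: "v \<in> V \<Longrightarrow> inner (gh w) v = inner (g w) v"
  using gh_orth[of v w] by (simp add: inner_diff_left)

lemma gh_lip: "norm (gh x - gh y) \<le> norm (g x - g y)"
proof -
  have dV: "gh x - gh y \<in> V" using subspace_diff[OF V_subspace gh_V gh_V] .
  have "(norm (gh x - gh y))\<^sup>2 = inner (gh x - gh y) (gh x - gh y)" by (simp add: power2_norm_eq_inner)
  also have "\<dots> = inner (gh x) (gh x - gh y) - inner (gh y) (gh x - gh y)" by (simp add: inner_diff_left)
  also have "\<dots> = inner (g x) (gh x - gh y) - inner (g y) (gh x - gh y)" using gh_inner[OF dV] by simp
  also have "\<dots> = inner (g x - g y) (gh x - gh y)" by (simp add: inner_diff_left)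
  also have "\<dots> \<le> norm (g x - g y) * norm (gh x - gh y)" by (rule norm_cauchy_schwarz)
  finally have "norm (gh x - gh y) * norm (gh x - gh y) \<le> norm (g x - g y) * norm (gh x - gh y)"
    by (simp add: power2_eq_square)
  then show ?thesis
    by (cases "norm (gh x - gh y) = 0") (auto simp: mult_le_cancel_right)
qed

lemma cp_eq:
  assumes x: "x \<in> W"
  shows "closest_point W (x - \<eta> *\<^sub>R g x) = closest_point W (x - \<eta> *\<^sub>R gh x)"
proof -
  let ?u = "x - \<eta> *\<^sub>R g x" and ?u' = "x - \<eta> *\<^sub>R gh x"
  let ?n = "g x - gh x"
  have Wne: "W \<noteq> {}" using x by blast
  have uu: "?u = ?u' - \<eta> *\<^sub>R ?n" by (simp add: algebra_simps)
  have sq: "(norm (?u - z))\<^sup>2 = (norm (?u' - z))\<^sup>2 + \<eta>\<^sup>2 * (norm ?n)\<^sup>2" if z: "z \<in> W" for z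
  proof -
    have xz: "x - z \<in> V" using W_diff[OF z x] .
    have sg: "\<eta> *\<^sub>R gh x \<in> V" by (rule subspace_scale[OF V_subspace gh_V])
    from xz sg have "(x - z) - \<eta> *\<^sub>R gh x \<in> V" by (rule subspace_diff[OF V_subspace])
    then have "?u' - z \<in> V" by (simp add: algebra_simps)
    from gh_orth[OF this, of x] have o: "inner (?u' - z) ?n = 0" by (simp add: inner_commute)
    have e: "?u - z = (?u' - z) - \<eta> *\<^sub>R ?n" using uu by simp
    have "(norm ((?u' - z) - \<eta> *\<^sub>R ?n))\<^sup>2 = (norm (?u' - z))\<^sup>2 - 2 * inner (?u' - z) (\<eta> *\<^sub>R ?n) + (norm (\<eta> *\<^sub>R ?n))\<^sup>2"
      by (rule norm_sq_diff)
    then have "(norm (?u - z))\<^sup>2 = (norm (?u' - z))\<^sup>2 - 2 * inner (?u' - z) (\<eta> *\<^sub>R ?n) + (norm (\<eta> *\<^sub>R ?n))\<^sup>2"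
      unfolding e .
    then show ?thesis using o by (simp add: power_mult_distrib)
  qed
  let ?c = "closest_point W ?u'"
  have c: "?c \<in> W" using closest_point_in_set[OF closedW Wne] .
  have "\<forall>z\<in>W. dist ?u ?c \<le> dist ?u z"
  proof
    fix z assume z: "z \<in> W"
    have "dist ?u' ?c \<le> dist ?u' z" using closest_point_le[OF closedW z] .
    then have "(norm (?u' - ?c))\<^sup>2 \<le> (norm (?u' - z))\<^sup>2" by (simp add: dist_norm power_mono)
    then have "(norm (?u - ?c))\<^sup>2 \<le> (norm (?u - z))\<^sup>2" using sq[OF c] sq[OF z] by simp
    then show "dist ?u ?c \<le> dist ?u z" by (simp add: dist_norm power2_le_iff_abs_le)
  qed
  then have "?c = closest_point W ?u" using closest_point_unique[OF convexW closedW c] by blast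
  then show ?thesis by simp
qed

lemma a_fix:
  assumes "\<eta> \<ge> 0"
  shows "closest_point W (a - \<eta> *\<^sub>R gh a) = a"
proof -
  have "\<forall>z\<in>W. dist (a - \<eta> *\<^sub>R gh a) a \<le> dist (a - \<eta> *\<^sub>R gh a) z"
  proof
    fix z assume z: "z \<in> W"
    have i: "inner (gh a) (z - a) \<ge> 0" using gh_inner[OF W_diff[OF aW z]] opt z by simp
    have e: "(a - \<eta> *\<^sub>R gh a) - z = (a - z) - \<eta> *\<^sub>R gh a" by simp
    have "(norm ((a - z) - \<eta> *\<^sub>R gh a))\<^sup>2 = (norm (a - z))\<^sup>2 - 2 * inner (a - z) (\<eta> *\<^sub>R gh a) + (norm (\<eta> *\<^sub>R gh a))\<^sup>2"
      by (rule norm_sq_diff)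
    then have "(norm ((a - \<eta> *\<^sub>R gh a) - z))\<^sup>2 = (norm (a - z))\<^sup>2 - 2 * inner (a - z) (\<eta> *\<^sub>R gh a) + (norm (\<eta> *\<^sub>R gh a))\<^sup>2"
      unfolding e .
    also have "inner (a - z) (\<eta> *\<^sub>R gh a) = - \<eta> * inner (gh a) (z - a)"
      by (simp add: inner_commute inner_diff_left inner_diff_right algebra_simps)
    finally have "(norm ((a - \<eta> *\<^sub>R gh a) - z))\<^sup>2 \<ge> (norm (\<eta> *\<^sub>R gh a))\<^sup>2"
      using i assms by (simp add: mult_nonneg_nonneg)
    then show "dist (a - \<eta> *\<^sub>R gh a) a \<le> dist (a - \<eta> *\<^sub>R gh a) z"
      by (simp add: dist_norm power2_le_iff_abs_le)
  qed
  from closest_point_unique[OF convexW closedW aW this] show ?thesis by simp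
qed

end

lemma alg_contract:
  fixes lam bet A B C :: real
  assumes "0 < lam" "lam < bet" "B + lam * bet * C \<le> (lam + bet) * A"
  shows "C - 2 * (2 / (lam + bet)) * A + (2 / (lam + bet))\<^sup>2 * B \<le> ((bet - lam) / (bet + lam))\<^sup>2 * C"
proof -
  define s where "s = lam + bet"
  have s: "s > 0" unfolding s_def using assms by simp
  define \<eta> where "\<eta> = 2 / s"
  have bs: "bet + lam = s" unfolding s_def by simp
  have h1: "\<eta> * s = 2" unfolding \<eta>_def using s by simp
  have h2: "((bet - lam) / (bet + lam))\<^sup>2 = 1 - \<eta>\<^sup>2 * lam * bet"
  proof -
    have "((bet - lam) / (bet + lam))\<^sup>2 = (bet - lam)\<^sup>2 / s\<^sup>2" unfolding bs by (simp add: power_divide)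
    also have "(bet - lam)\<^sup>2 = s\<^sup>2 - 4 * lam * bet" unfolding s_def by (simp add: power2_eq_square algebra_simps)
    also have "(s\<^sup>2 - 4 * lam * bet) / s\<^sup>2 = 1 - (4 / s\<^sup>2) * lam * bet" using s by (simp add: diff_divide_distrib)
    also have "4 / s\<^sup>2 = \<eta>\<^sup>2" unfolding \<eta>_def by (simp add: power_divide)
    finally show ?thesis .
  qed
  have eq: "C - 2 * \<eta> * A + \<eta>\<^sup>2 * B - (1 - \<eta>\<^sup>2 * lam * bet) * C = \<eta>\<^sup>2 * (B + lam * bet * C - s * A)"
  proof -
    have "\<eta>\<^sup>2 * (s * A) = 2 * \<eta> * A" using h1 by (simp add: power2_eq_square algebra_simps)
    then show ?thesis by (simp add: algebra_simps)
  qed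
  have "\<eta>\<^sup>2 * (B + lam * bet * C - s * A) \<le> 0"
    using assms(3) unfolding s_def by (intro mult_nonneg_nonpos) auto
  then have "C - 2 * \<eta> * A + \<eta>\<^sup>2 * B \<le> (1 - \<eta>\<^sup>2 * lam * bet) * C" using eq by linarith
  then show ?thesis unfolding h2 \<eta>_def s_def .
qed

lemma norm_sq_add:
  fixes u n :: "'a::real_inner"
  shows "(norm (u + n))\<^sup>2 = (norm u)\<^sup>2 + 2 * inner u n + (norm n)\<^sup>2"
  unfolding power2_norm_eq_inner by (simp add: inner_add inner_commute)

context pgd_setting
begin

definition h where "h u = F u - lam / 2 * (norm (u - a))\<^sup>2"
definition q where "q u = gh u - lam *\<^sub>R (u - a)"

lemma h_id:
  assumes u: "u \<in> W" and v: "v \<in> W"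
  shows "h v - h u - inner (q u) (v - u) = F v - F u - inner (g u) (v - u) - lam / 2 * (norm (v - u))\<^sup>2"
proof -
  have gi: "inner (gh u) (v - u) = inner (g u) (v - u)" by (rule gh_inner[OF W_diff[OF u v]])
  have n: "(norm (v - a))\<^sup>2 = (norm (v - u))\<^sup>2 + 2 * inner (v - u) (u - a) + (norm (u - a))\<^sup>2"
  proof -
    show ?thesis using norm_sq_add[of "v - u" "u - a"] by simp
  qed
  have "inner (q u) (v - u) = inner (gh u) (v - u) - inner (lam *\<^sub>R (u - a)) (v - u)"
    unfolding q_def by (rule inner_diff_left)
  also have "\<dots> = inner (g u) (v - u) - lam * inner (u - a) (v - u)"
    unfolding gi inner_scaleR_left ..
  also have "inner (u - a) (v - u) = inner (v - u) (u - a)" by (rule inner_commute)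
  finally have "inner (q u) (v - u) = inner (g u) (v - u) - lam * inner (v - u) (u - a)" .
  then show ?thesis unfolding h_def n by (simp add: algebra_simps)
qed

lemma hC: assumes u: "u \<in> W" and v: "v \<in> W" shows "0 \<le> h v - h u - inner (q u) (v - u)"
proof -
  have "F v - F u \<ge> inner (g u) (v - u) + lam / 2 * (norm (v - u))\<^sup>2" using sc u v by blast
  then show ?thesis using h_id[OF u v] by linarith
qed

lemma hU: assumes u: "u \<in> W" and v: "v \<in> W"
  shows "h v - h u - inner (q u) (v - u) \<le> (bet - lam) / 2 * (norm (v - u))\<^sup>2"
proof -
  have "F v - F u - inner (g u) (v - u) \<le> bet / 2 * (norm (v - u))\<^sup>2"
    by (rule upper_quad[OF convexW u v der sm])
  then show ?thesis using h_id[OF u v] by (simp add: algebra_simps)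
qed

lemma cocoer:
  assumes x: "x \<in> W" and y: "y \<in> W"
    and u1: "x - (1 / (bet - lam)) *\<^sub>R (q x - q y) \<in> W"
    and u2: "y + (1 / (bet - lam)) *\<^sub>R (q x - q y) \<in> W"
  shows "(norm (q x - q y))\<^sup>2 / (bet - lam) \<le> inner (q x - q y) (x - y)"
proof -
  define M where "M = bet - lam"
  have M: "M > 0" unfolding M_def using lambet by simp
  define e where "e = q x - q y"
  define d where "d = x - y"
  define p1 where "p1 = x - (1 / M) *\<^sub>R e"
  define p2 where "p2 = y + (1 / M) *\<^sub>R e"
  have p1: "p1 \<in> W" using u1 unfolding p1_def M_def e_def .
  have p2: "p2 \<in> W" using u2 unfolding p2_def M_def e_def .
  have n1: "(norm (p1 - x))\<^sup>2 = (norm e)\<^sup>2 / M\<^sup>2" unfolding p1_def using M by (simp add: power_divide)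
  have n2: "(norm (p2 - y))\<^sup>2 = (norm e)\<^sup>2 / M\<^sup>2" unfolding p2_def using M by (simp add: power_divide)
  have c1: "0 \<le> h p1 - h y - inner (q y) (p1 - y)" by (rule hC[OF y p1])
  have c2: "h p1 - h x - inner (q x) (p1 - x) \<le> M / 2 * ((norm e)\<^sup>2 / M\<^sup>2)"
    using hU[OF x p1] n1 unfolding M_def by simp
  have c3: "0 \<le> h p2 - h x - inner (q x) (p2 - x)" by (rule hC[OF x p2])
  have c4: "h p2 - h y - inner (q y) (p2 - y) \<le> M / 2 * ((norm e)\<^sup>2 / M\<^sup>2)"
    using hU[OF y p2] n2 unfolding M_def by simp
  have ee: "inner e e = (norm e)\<^sup>2" by (simp add: power2_norm_eq_inner)
  have i1: "inner (q y) (p1 - y) = inner (q y) d - inner (q y) e / M"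
    unfolding p1_def d_def by (simp add: inner_diff_right algebra_simps)
  have i2: "inner (q x) (p1 - x) = - inner (q x) e / M"
    unfolding p1_def by (simp add: inner_diff_right)
  have i3: "inner (q x) (p2 - x) = - inner (q x) d + inner (q x) e / M"
    unfolding p2_def d_def by (simp add: inner_diff_right algebra_simps)
  have i4: "inner (q y) (p2 - y) = inner (q y) e / M"
    unfolding p2_def by simp
  have i5: "inner (q x) e - inner (q y) e = (norm e)\<^sup>2"
    unfolding e_def by (simp add: power2_norm_eq_inner inner_diff)
  have i6: "inner (q x) d - inner (q y) d = inner e d"
    unfolding e_def by (simp add: inner_diff_left)
  have hm: "M / 2 * ((norm e)\<^sup>2 / M\<^sup>2) = (norm e)\<^sup>2 / M / 2"
    using M by (simp add: power2_eq_square field_simps)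
  have "inner (q x) e / M - inner (q y) e / M = (norm e)\<^sup>2 / M"
    using i5 by (simp add: diff_divide_distrib[symmetric])
  then have "(norm e)\<^sup>2 / M \<le> inner e d"
    using c1 c2 c3 c4 i1 i2 i3 i4 i6 hm by linarith
  then show ?thesis unfolding e_def d_def M_def .
qed

definition G where "G w = w - (2 / (lam + bet)) *\<^sub>R gh w"

lemma G_local:
  assumes x: "x \<in> W" and y: "y \<in> W"
    and u1: "x - (1 / (bet - lam)) *\<^sub>R (q x - q y) \<in> W"
    and u2: "y + (1 / (bet - lam)) *\<^sub>R (q x - q y) \<in> W"
  shows "norm (G x - G y) \<le> (bet - lam) / (bet + lam) * norm (x - y)"
proof -
  define u where "u = gh x - gh y"
  define d where "d = x - y"
  define A where "A = inner u d"
  define B where "B = (norm u)\<^sup>2"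
  define C where "C = (norm d)\<^sup>2"
  have e: "q x - q y = u - lam *\<^sub>R d" unfolding q_def u_def d_def by (simp add: algebra_simps)
  have co: "(norm (u - lam *\<^sub>R d))\<^sup>2 / (bet - lam) \<le> inner (u - lam *\<^sub>R d) d"
    using cocoer[OF x y u1 u2] unfolding e d_def[symmetric] .
  have ne: "(norm (u - lam *\<^sub>R d))\<^sup>2 = B - 2 * lam * A + lam\<^sup>2 * C"
    unfolding A_def B_def C_def using norm_sq_diff[of u "lam *\<^sub>R d"] by (simp add: power_mult_distrib)
  have ie: "inner (u - lam *\<^sub>R d) d = A - lam * C"
    unfolding A_def C_def by (simp add: inner_diff_left power2_norm_eq_inner)
  have M: "bet - lam > 0" using lambet by simp
  have "B - 2 * lam * A + lam\<^sup>2 * C \<le> (bet - lam) * (A - lam * C)"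
    using co unfolding ne ie using M by (simp add: pos_divide_le_eq mult.commute)
  then have key: "B + lam * bet * C \<le> (lam + bet) * A" by (simp add: algebra_simps power2_eq_square)
  have "G x - G y = d - (2 / (lam + bet)) *\<^sub>R u" unfolding G_def d_def u_def by (simp add: algebra_simps)
  then have "(norm (G x - G y))\<^sup>2 = C - 2 * (2 / (lam + bet)) * A + (2 / (lam + bet))\<^sup>2 * B"
    unfolding A_def B_def C_def using norm_sq_diff[of d "(2 / (lam + bet)) *\<^sub>R u"] lam0 lambet
    by (simp add: power_mult_distrib inner_commute power_divide power2_abs)
  also have "\<dots> \<le> ((bet - lam) / (bet + lam))\<^sup>2 * C" by (rule alg_contract[OF lam0 lambet key])
  also have "\<dots> = ((bet - lam) / (bet + lam) * norm (x - y))\<^sup>2" unfolding C_def d_def by (rule power_mult_distrib[symmetric])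
  finally have "(norm (G x - G y))\<^sup>2 \<le> ((bet - lam) / (bet + lam) * norm (x - y))\<^sup>2" .
  moreover have "(bet - lam) / (bet + lam) * norm (x - y) \<ge> 0" using lam0 lambet by simp
  ultimately show ?thesis by (rule power2_le_imp_le)
qed

end

context pgd_setting
begin

lemma q_diff_V: "p \<in> W \<Longrightarrow> p' \<in> W \<Longrightarrow> q p - q p' \<in> V"
proof -
  assume p: "p \<in> W" and p': "p' \<in> W"
  have "q p - q p' = (gh p - gh p') - lam *\<^sub>R (p - p')" unfolding q_def by (simp add: algebra_simps)
  moreover have "gh p - gh p' \<in> V" by (rule subspace_diff[OF V_subspace gh_V gh_V])
  moreover have "lam *\<^sub>R (p - p') \<in> V" by (rule subspace_scale[OF V_subspace W_diff[OF p' p]])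
  ultimately show ?thesis using subspace_diff[OF V_subspace] by simp
qed

lemma q_diff_norm: "p \<in> W \<Longrightarrow> p' \<in> W \<Longrightarrow> norm (q p - q p') \<le> (bet + lam) * norm (p - p')"
proof -
  assume p: "p \<in> W" and p': "p' \<in> W"
  have eq: "q p - q p' = (gh p - gh p') - lam *\<^sub>R (p - p')" unfolding q_def by (simp add: algebra_simps)
  have "norm (q p - q p') \<le> norm (gh p - gh p') + norm (lam *\<^sub>R (p - p'))"
    unfolding eq by (rule norm_triangle_ineq4)
  also have "norm (gh p - gh p') \<le> bet * norm (p - p')" using gh_lip[of p p'] sm p p' by (meson order_trans)
  also have "norm (lam *\<^sub>R (p - p')) = lam * norm (p - p')" using lam0 by simp
  finally show ?thesis by (simp add: algebra_simps)
qed

lemma G_local_ball: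
  assumes p: "p \<in> W" and p': "p' \<in> W" and r: "r > 0"
    and bp: "ball p r \<inter> AH \<subseteq> W" and bp': "ball p' r \<inter> AH \<subseteq> W"
    and small: "(bet + lam) / (bet - lam) * norm (p - p') < r"
  shows "norm (G p - G p') \<le> (bet - lam) / (bet + lam) * norm (p - p')"
proof (rule G_local[OF p p'])
  define e where "e = (1 / (bet - lam)) *\<^sub>R (q p - q p')"
  have M: "bet - lam > 0" using lambet by simp
  have eV: "e \<in> V" unfolding e_def by (rule subspace_scale[OF V_subspace q_diff_V[OF p p']])
  have "norm e = norm (q p - q p') / (bet - lam)" unfolding e_def using M by simp
  also have "\<dots> \<le> (bet + lam) * norm (p - p') / (bet - lam)"
    using q_diff_norm[OF p p'] M by (simp add: divide_right_mono)
  also have "\<dots> < r" using small by simp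
  finally have ne: "norm e < r" .
  have pA: "p \<in> AH" and pA': "p' \<in> AH" using p p' W_AH by auto
  have "p + (- e) \<in> AH" by (rule AH_add[OF pA subspace_neg[OF V_subspace eV]])
  moreover have "p + (- e) \<in> ball p r" using ne by (simp add: dist_norm)
  ultimately have "p + (- e) \<in> W" using bp by blast
  then show "p - (1 / (bet - lam)) *\<^sub>R (q p - q p') \<in> W" unfolding e_def by simp
  have "p' + e \<in> AH" by (rule AH_add[OF pA' eV])
  moreover have "p' + e \<in> ball p' r" using ne by (simp add: dist_norm)
  ultimately have "p' + e \<in> W" using bp' by blast
  then show "p' + (1 / (bet - lam)) *\<^sub>R (q p - q p') \<in> W" unfolding e_def by simp
qed

lemma seg_ball:
  assumes x: "x \<in> W" and y: "y \<in> W" and bx: "ball x r \<inter> AH \<subseteq> W" and by': "ball y r \<inter> AH \<subseteq> W"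
    and t: "0 \<le> t" "t \<le> 1"
  shows "ball (x + t *\<^sub>R (y - x)) r \<inter> AH \<subseteq> W"
proof
  fix z assume z: "z \<in> ball (x + t *\<^sub>R (y - x)) r \<inter> AH"
  define p where "p = x + t *\<^sub>R (y - x)"
  have pW: "p \<in> W" unfolding p_def by (rule seg_in[OF convexW x y t])
  define v where "v = z - p"
  have pA: "p \<in> AH" using pW W_AH by blast
  have zA: "z \<in> AH" using z by blast
  have vV: "v \<in> V" unfolding v_def by (rule AH_diff[OF pA zA])
  have nv: "norm v < r" using z unfolding v_def p_def by (simp add: dist_norm norm_minus_commute)
  have "x + v \<in> AH" by (rule AH_add[OF _ vV]) (use x W_AH in blast)
  moreover have "x + v \<in> ball x r" using nv by (simp add: dist_norm)
  ultimately have xv: "x + v \<in> W" using bx by blast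
  have "y + v \<in> AH" by (rule AH_add[OF _ vV]) (use y W_AH in blast)
  moreover have "y + v \<in> ball y r" using nv by (simp add: dist_norm)
  ultimately have yv: "y + v \<in> W" using by' by blast
  have "(x + v) + t *\<^sub>R ((y + v) - (x + v)) \<in> W" by (rule seg_in[OF convexW xv yv t])
  moreover have "(x + v) + t *\<^sub>R ((y + v) - (x + v)) = z" unfolding v_def p_def by (simp add: algebra_simps)
  ultimately show "z \<in> W" by simp
qed

lemma G_lip_relint:
  assumes x: "x \<in> rel_interior W" and y: "y \<in> rel_interior W"
  shows "norm (G x - G y) \<le> (bet - lam) / (bet + lam) * norm (x - y)"
proof -
  define \<gamma> where "\<gamma> = (bet - lam) / (bet + lam)"
  define K where "K = (bet + lam) / (bet - lam)"
  have K0: "K > 0" unfolding K_def using lam0 lambet by simp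
  obtain r1 where r1: "r1 > 0" "ball x r1 \<inter> AH \<subseteq> W" "x \<in> W"
    using x unfolding mem_rel_interior_ball AH_def by blast
  obtain r2 where r2: "r2 > 0" "ball y r2 \<inter> AH \<subseteq> W" "y \<in> W"
    using y unfolding mem_rel_interior_ball AH_def by blast
  define r where "r = min r1 r2"
  have r: "r > 0" unfolding r_def using r1 r2 by simp
  have "ball x r \<subseteq> ball x r1" by (rule subset_ball) (simp add: r_def)
  then have bx: "ball x r \<inter> AH \<subseteq> W" using r1(2) by blast
  have "ball y r \<subseteq> ball y r2" by (rule subset_ball) (simp add: r_def)
  then have by': "ball y r \<inter> AH \<subseteq> W" using r2(2) by blast
  obtain n :: nat where n: "K * norm (x - y) / r < real n" using reals_Archimedean2 by blast
  define N where "N = Suc n"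
  have N0: "real N > 0" unfolding N_def by simp
  have NK: "K * (norm (x - y) / real N) < r"
  proof -
    have "K * norm (x - y) / r < real N" using n unfolding N_def by simp
    then have "K * norm (x - y) < real N * r" using r by (simp add: divide_less_eq mult.commute)
    then show ?thesis using N0 by (simp add: divide_less_eq mult.commute)
  qed
  define p where "p i = x + (real i / real N) *\<^sub>R (y - x)" for i :: nat
  have t01: "0 \<le> real i / real N" "real i / real N \<le> 1" if "i \<le> N" for i
    using that N0 by (auto simp: divide_le_eq_1)
  have pW: "p i \<in> W" if "i \<le> N" for i
    unfolding p_def using t01[OF that] by (rule seg_in[OF convexW r1(3) r2(3)])
  have pB: "ball (p i) r \<inter> AH \<subseteq> W" if "i \<le> N" for i
    unfolding p_def using t01[OF that] by (rule seg_ball[OF r1(3) r2(3) bx by'])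
  have pd: "p (Suc i) - p i = (1 / real N) *\<^sub>R (y - x)" for i
  proof -
    have "p (Suc i) - p i = (real (Suc i) / real N - real i / real N) *\<^sub>R (y - x)"
      unfolding p_def by (simp add: scaleR_diff_left)
    also have "real (Suc i) / real N - real i / real N = 1 / real N" by (simp add: diff_divide_distrib[symmetric])
    finally show ?thesis .
  qed
  have step: "norm (G (p (Suc i)) - G (p i)) \<le> \<gamma> * (norm (x - y) / real N)" if "i < N" for i
  proof -
    have nd: "norm (p (Suc i) - p i) = norm (x - y) / real N"
      unfolding pd using N0 by (simp add: norm_minus_commute)
    have i1: "Suc i \<le> N" "i \<le> N" using that by auto
    have sm': "(bet + lam) / (bet - lam) * norm (p (Suc i) - p i) < r" unfolding nd using NK unfolding K_def .
    show ?thesis unfolding \<gamma>_def nd[symmetric]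
      by (rule G_local_ball[OF pW[OF i1(1)] pW[OF i1(2)] r pB[OF i1(1)] pB[OF i1(2)] sm'])
  qed
  have p0: "p 0 = x" unfolding p_def by simp
  have pN: "p N = y" unfolding p_def using N0 by simp
  have "G y - G x = (\<Sum>i<N. G (p (Suc i)) - G (p i))"
    by (subst sum_lessThan_telescope) (simp add: p0 pN)
  then have "norm (G y - G x) \<le> (\<Sum>i<N. norm (G (p (Suc i)) - G (p i)))"
    by (simp add: norm_sum)
  also have "\<dots> \<le> (\<Sum>i<N. \<gamma> * (norm (x - y) / real N))" by (rule sum_mono) (use step in auto)
  also have "\<dots> = \<gamma> * norm (x - y)" using N0 by simp
  finally show ?thesis unfolding \<gamma>_def by (simp add: norm_minus_commute)
qed

lemma gh_cont: "continuous_on W gh"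
proof (rule lipschitz_on_continuous_on)
  show "bet-lipschitz_on W gh"
  proof (rule lipschitz_onI)
    fix x y assume xy: "x \<in> W" "y \<in> W"
    have "norm (gh x - gh y) \<le> norm (g x - g y)" by (rule gh_lip)
    also have "\<dots> \<le> bet * norm (x - y)" using sm xy by blast
    finally show "dist (gh x) (gh y) \<le> bet * dist x y" by (simp add: dist_norm)
  next
    show "0 \<le> bet" using lam0 lambet by simp
  qed
qed

lemma G_cont: "continuous_on W G"
  unfolding G_def[abs_def] by (intro continuous_intros gh_cont)

lemma G_lip:
  assumes x: "x \<in> W" and y: "y \<in> W"
  shows "norm (G x - G y) \<le> (bet - lam) / (bet + lam) * norm (x - y)"
proof -
  define \<gamma> where "\<gamma> = (bet - lam) / (bet + lam)"
  have cl: "closure (rel_interior W) = W"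
    using convex_closure_rel_interior[OF convexW] closure_closed[OF closedW] by simp
  have step1: "norm (G x' - G y') - \<gamma> * norm (x' - y') \<le> 0" if x': "x' \<in> W" and y': "y' \<in> rel_interior W" for x' y'
  proof (rule continuous_le_on_closure[where S = "rel_interior W" and f = "\<lambda>x'. norm (G x' - G y') - \<gamma> * norm (x' - y')"])
    show "continuous_on (closure (rel_interior W)) (\<lambda>x'. norm (G x' - G y') - \<gamma> * norm (x' - y'))"
      unfolding cl by (intro continuous_intros G_cont)
    show "x' \<in> closure (rel_interior W)" using x' cl by simp
    fix z assume "z \<in> rel_interior W"
    then show "norm (G z - G y') - \<gamma> * norm (z - y') \<le> 0"
      using G_lip_relint[OF _ y'] unfolding \<gamma>_def by simp
  qed
  have "norm (G x - G y') - \<gamma> * norm (x - y') \<le> 0" if y': "y' \<in> W" for y'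
  proof (rule continuous_le_on_closure[where S = "rel_interior W" and f = "\<lambda>y'. norm (G x - G y') - \<gamma> * norm (x - y')"])
    show "continuous_on (closure (rel_interior W)) (\<lambda>y'. norm (G x - G y') - \<gamma> * norm (x - y'))"
      unfolding cl by (intro continuous_intros G_cont)
    show "y' \<in> closure (rel_interior W)" using y' cl by simp
    fix z assume "z \<in> rel_interior W"
    then show "norm (G x - G z) - \<gamma> * norm (x - z) \<le> 0" using step1[OF x] by simp
  qed
  then show ?thesis using y unfolding \<gamma>_def by simp
qed

lemma T_contract:
  assumes x: "x \<in> W"
  shows "norm (closest_point W (x - (2 / (lam + bet)) *\<^sub>R g x) - a) \<le> (bet - lam) / (bet + lam) * norm (x - a)"
proof -
  have Wne: "W \<noteq> {}" using x by blast
  have eta: "2 / (lam + bet) \<ge> 0" using lam0 lambet by simp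
  have "closest_point W (x - (2 / (lam + bet)) *\<^sub>R g x) = closest_point W (G x)"
    unfolding G_def by (rule cp_eq[OF x])
  moreover have "a = closest_point W (G a)" unfolding G_def using a_fix[OF eta] by simp
  ultimately have "norm (closest_point W (x - (2 / (lam + bet)) *\<^sub>R g x) - a) = dist (closest_point W (G x)) (closest_point W (G a))"
    by (simp add: dist_norm)
  also have "\<dots> \<le> dist (G x) (G a)" by (rule closest_point_lipschitz[OF convexW closedW Wne])
  also have "\<dots> \<le> (bet - lam) / (bet + lam) * norm (x - a)" unfolding dist_norm by (rule G_lip[OF x aW])
  finally show ?thesis .
qed

end

lemma emp_loss_snoc:
  assumes "length R = n" "n > 0"
  shows "emp_loss f (R @ [z]) w = (real n * emp_loss f R w + f w z) / (real n + 1)"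
  using assms unfolding emp_loss_def by simp

lemma b_pos: "0 < \<epsilon> \<Longrightarrow> 0 < \<delta> \<Longrightarrow> \<delta> < 1 \<Longrightarrow> b_eps_delta \<epsilon> \<delta> > 0"
proof -
  assume "0 < \<epsilon>" "0 < \<delta>" "\<delta> < 1"
  then have "ln (1 / \<delta>) > 0" by (subst ln_div) auto
  then have "sqrt (2 * ln (1 / \<delta>)) < sqrt (2 * ln (1 / \<delta>) + 2 * \<epsilon>)" using \<open>0 < \<epsilon>\<close> by simp
  then show ?thesis unfolding b_eps_delta_def by simp
qed

lemma gamma_bound:
  fixes \<gamma> X :: real and I :: nat
  assumes g: "0 < \<gamma>" "\<gamma> < 1" and X: "X > 0" and I: "ln X / ln (1 / \<gamma>) \<le> real I"
  shows "\<gamma> ^ I * X \<le> 1"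
proof -
  have l: "ln (1 / \<gamma>) > 0" using g by (subst ln_div) auto
  have "ln X \<le> real I * ln (1 / \<gamma>)" using I l by (simp add: divide_le_eq)
  also have "\<dots> = ln ((1 / \<gamma>) ^ I)" using g by (simp add: ln_realpow)
  finally have "X \<le> (1 / \<gamma>) ^ I" using X g by (subst (asm) ln_le_cancel_iff) auto
  then have h1: "\<gamma> ^ I * X \<le> \<gamma> ^ I * (1 / \<gamma>) ^ I" using g by (intro mult_left_mono) auto
  have h2: "\<gamma> ^ I * (1 / \<gamma>) ^ I = 1" using g by (simp add: power_mult_distrib[symmetric])
  show ?thesis using h1 h2 by linarith
qed

theorem mainTheorem13:
  fixes f :: "'a::euclidean_space \<Rightarrow> 'z \<Rightarrow> real"
    and W :: "'a set" and R :: "'z list" and z :: 'z and n :: nat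
    and L lam bet \<sigma> \<epsilon> \<delta> :: real and I :: nat and wR wR' :: 'a
  assumes W: "closed W" "convex W" "W \<noteq> {}"
    and diff: "\<forall>z. \<forall>w\<in>W. (\<lambda>w. f w z) differentiable (at w)"
    and lip: "\<forall>z. \<forall>w\<in>W. \<forall>w'\<in>W. \<bar>f w z - f w' z\<bar> \<le> L * dist w w'"
    and n: "length R = n" "n > 0"
    and lam: "0 < lam" "lam < bet"
    and sc: "strongly_convex_on W lam (emp_loss f R)"
    and sm: "smooth_on W bet (emp_loss f R)"
    and wR: "wR \<in> W" "\<forall>w\<in>W. emp_loss f R wR \<le> emp_loss f R w"
    and wR': "wR' \<in> W" "\<forall>w\<in>W. emp_loss f (R @ [z]) wR' \<le> emp_loss f (R @ [z]) w"
    and \<sigma>: "\<sigma> > 0"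
    and \<epsilon>: "0 < \<epsilon>" "\<epsilon> < 1"
    and \<delta>: "0 < \<delta>" "\<delta> < 1"
    and I: "int I \<ge> I_R L n lam bet \<epsilon> \<delta> \<sigma>"
  shows "indistinguishable \<epsilon> \<delta>
           (gauss_output \<sigma> (proj_gd W (grad (emp_loss f R)) (2 / (lam + bet)) wR' I))
           (gauss_output \<sigma> wR)"
proof -
  define F where "F = emp_loss f R"
  define g where "g = grad F"
  define F' where "F' = emp_loss f (R @ [z])"
  define \<gamma> where "\<gamma> = (bet - lam) / (bet + lam)"
  define \<eta> where "\<eta> = 2 / (lam + bet)"
  define T where "T = (\<lambda>w. closest_point W (w - \<eta> *\<^sub>R g w))"
  have derF: "\<forall>w\<in>W. (F has_derivative (\<lambda>h. inner h (g w))) (at w)"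
  proof
    fix w assume w: "w \<in> W"
    have "F differentiable (at w)" unfolding F_def
      by (rule emp_loss_differentiable) (use diff w in blast)
    then have "GDERIV F w :> grad F w" by (rule differentiable_gderiv)
    then show "(F has_derivative (\<lambda>h. inner h (g w))) (at w)" unfolding g_def gderiv_def .
  qed
  have scF: "\<forall>w\<in>W. \<forall>w'\<in>W. F w - F w' \<ge> inner (g w') (w - w') + lam / 2 * (norm (w - w'))\<^sup>2"
    using sc unfolding strongly_convex_on_def F_def g_def .
  have smF: "\<forall>w\<in>W. \<forall>w'\<in>W. norm (g w - g w') \<le> bet * norm (w - w')"
    using sm unfolding smooth_on_def F_def g_def .
  have optR: "\<forall>y\<in>W. inner (g wR) (y - wR) \<ge> 0"
  proof
    fix y assume y: "y \<in> W"
    have "0 \<le> inner (y - wR) (g wR)"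
    proof (rule deriv_dir_ge[where \<phi> = F and \<phi>' = "\<lambda>h. inner h (g wR)" and c = 0 and v = "y - wR"])
      show "(F has_derivative (\<lambda>h. inner h (g wR))) (at wR)" using derF wR(1) by blast
      fix t :: real assume t: "0 < t" "t < 1"
      have "wR + t *\<^sub>R (y - wR) \<in> W" using seg_in[OF W(2) wR(1) y] t by simp
      then show "0 * t \<le> F (wR + t *\<^sub>R (y - wR)) - F wR" using wR(2) unfolding F_def by simp
    qed
    then show "inner (g wR) (y - wR) \<ge> 0" by (simp add: inner_commute)
  qed
  interpret P: pgd_setting W F g lam bet wR
    by unfold_locales (use W(1,2) wR(1) derF scF smF lam optR in auto)
  define d where "d = norm (wR' - wR)"
  have sens: "real n * lam * d\<^sup>2 \<le> L * d"
  proof -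
    let ?a = wR and ?b = wR'
    have s1: "F ?b - F ?a \<ge> inner (g ?a) (?b - ?a) + lam / 2 * d\<^sup>2"
      using scF wR(1) wR'(1) unfolding d_def by blast
    have s2: "F ?a - F ?b \<ge> inner (g ?b) (?a - ?b) + lam / 2 * d\<^sup>2"
      using scF wR(1) wR'(1) unfolding d_def by (metis norm_minus_commute)
    have o1: "inner (g ?a) (?b - ?a) \<ge> 0" using optR wR'(1) by blast
    have k1: "inner (g ?b) (?a - ?b) \<le> - lam * d\<^sup>2" using s1 s2 o1 by linarith
    obtain Df where Df: "((\<lambda>w. f w z) has_derivative Df) (at ?b)"
      using diff wR'(1) unfolding differentiable_def by blast
    have F'eq: "F' = (\<lambda>w. (real n * F w + f w z) / (real n + 1))"
      unfolding F'_def F_def by (rule ext) (rule emp_loss_snoc[OF n])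
    have dF': "(F' has_derivative (\<lambda>h. (real n * inner h (g ?b) + Df h) / (real n + 1))) (at ?b)"
      unfolding F'eq using derF wR'(1) Df by (auto intro!: derivative_eq_intros)
    have o2: "0 \<le> (real n * inner (?a - ?b) (g ?b) + Df (?a - ?b)) / (real n + 1)"
    proof (rule deriv_dir_ge[where c = 0 and v = "?a - ?b", OF dF'])
      fix t :: real assume t: "0 < t" "t < 1"
      have "?b + t *\<^sub>R (?a - ?b) \<in> W" using seg_in[OF W(2) wR'(1) wR(1)] t by simp
      then show "0 * t \<le> F' (?b + t *\<^sub>R (?a - ?b)) - F' ?b" using wR'(2) unfolding F'_def by simp
    qed
    then have o2': "0 \<le> real n * inner (?a - ?b) (g ?b) + Df (?a - ?b)"
      by (simp add: zero_le_divide_iff add_pos_nonneg)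
    have dm: "((\<lambda>w. - f w z) has_derivative (\<lambda>h. - Df h)) (at ?b)"
      using Df by (rule has_derivative_minus)
    have "- L * d \<le> - Df (?a - ?b)"
    proof (rule deriv_dir_ge[where c = "- L * d" and v = "?a - ?b", OF dm])
      fix t :: real assume t: "0 < t" "t < 1"
      have p: "?b + t *\<^sub>R (?a - ?b) \<in> W" using seg_in[OF W(2) wR'(1) wR(1)] t by simp
      have "\<bar>f (?b + t *\<^sub>R (?a - ?b)) z - f ?b z\<bar> \<le> L * dist (?b + t *\<^sub>R (?a - ?b)) ?b"
        using lip p wR'(1) by blast
      also have "dist (?b + t *\<^sub>R (?a - ?b)) ?b = t * d"
        unfolding d_def dist_norm using t by (simp add: norm_minus_commute)
      finally have "\<bar>f (?b + t *\<^sub>R (?a - ?b)) z - f ?b z\<bar> \<le> L * (t * d)" .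
      then show "- L * d * t \<le> - f (?b + t *\<^sub>R (?a - ?b)) z - - f ?b z" by (simp add: abs_le_iff algebra_simps)
    qed
    then have Dfb: "Df (?a - ?b) \<le> L * d" by simp
    have "real n * (lam * d\<^sup>2) \<le> real n * inner (g ?b) (?b - ?a)"
    proof (rule mult_left_mono)
      have "inner (g ?b) (?b - ?a) = - inner (g ?b) (?a - ?b)" by (simp add: inner_diff_right)
      then show "lam * d\<^sup>2 \<le> inner (g ?b) (?b - ?a)" using k1 by simp
    qed simp
    also have "real n * inner (g ?b) (?b - ?a) = - (real n * inner (?a - ?b) (g ?b))"
      by (simp add: inner_diff_right inner_commute algebra_simps)
    also have "\<dots> \<le> Df (?a - ?b)" using o2' by linarith
    also have "\<dots> \<le> L * d" by (rule Dfb)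
    finally show ?thesis by (simp add: algebra_simps)
  qed
  have iter: "(T ^^ t) wR' \<in> W \<and> norm ((T ^^ t) wR' - wR) \<le> \<gamma> ^ t * d" for t
  proof (induction t)
    case 0
    then show ?case using wR'(1) unfolding d_def by simp
  next
    case (Suc t)
    let ?x = "(T ^^ t) wR'"
    have xW: "?x \<in> W" using Suc by blast
    have "T ?x \<in> W" unfolding T_def by (rule closest_point_in_set[OF W(1,3)])
    moreover have "norm (T ?x - wR) \<le> \<gamma> * norm (?x - wR)"
    proof -
      have Tx: "T ?x = closest_point W (?x - (2 / (lam + bet)) *\<^sub>R g ?x)" by (simp add: T_def \<eta>_def)
      show ?thesis unfolding Tx \<gamma>_def by (rule P.T_contract[OF xW])
    qed
    moreover have "\<gamma> * norm (?x - wR) \<le> \<gamma> * (\<gamma> ^ t * d)"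
      using Suc lam unfolding \<gamma>_def by (intro mult_left_mono) auto
    ultimately show ?case by simp
  qed
  define c1 where "c1 = proj_gd W (grad (emp_loss f R)) (2 / (lam + bet)) wR' I"
  have c1: "c1 = (T ^^ I) wR'" unfolding c1_def proj_gd_def T_def g_def F_def \<eta>_def ..
  have bpos: "b_eps_delta \<epsilon> \<delta> > 0" using b_pos \<epsilon> \<delta> by blast
  have g01: "0 < \<gamma>" "\<gamma> < 1" unfolding \<gamma>_def using lam by auto
  have close: "norm (c1 - wR) \<le> \<sigma> * b_eps_delta \<epsilon> \<delta>"
  proof (cases "d = 0")
    case True
    then have "norm (c1 - wR) \<le> 0" using iter[of I] c1 by simp
    then show ?thesis using \<sigma> bpos by (smt (verit) mult_pos_pos)
  next
    case False
    then have d0: "d > 0" unfolding d_def by simp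
    have nl: "real n * lam > 0" using n lam by simp
    have "real n * lam * d \<le> L" using sens d0 by (simp add: power2_eq_square)
    then have dL: "d \<le> L / (real n * lam)" using nl by (simp add: pos_le_divide_eq mult.commute)
    have Lpos: "L > 0" using \<open>real n * lam * d \<le> L\<close> nl d0 by (smt (verit) mult_pos_pos)
    define X where "X = L / (real n * lam * \<sigma> * b_eps_delta \<epsilon> \<delta>)"
    have X0: "X > 0" unfolding X_def using Lpos nl \<sigma> bpos by simp
    have ge: "(bet / lam - 1) / (bet / lam + 1) = \<gamma>"
    proof -
      have l0: "lam \<noteq> 0" "bet + lam \<noteq> 0" using lam by auto
      have e1: "bet / lam - 1 = (bet - lam) / lam" using l0 by (simp add: diff_divide_distrib)
      have e2: "bet / lam + 1 = (bet + lam) / lam" using l0 by (simp add: add_divide_distrib)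
      show ?thesis unfolding e1 e2 \<gamma>_def using l0 by simp
    qed
    have "ln X / ln (1 / \<gamma>) \<le> real I"
    proof -
      have "I_R L n lam bet \<epsilon> \<delta> \<sigma> = \<lceil>ln X / ln (1 / \<gamma>)\<rceil>"
        unfolding I_R_def Let_def ge X_def ..
      then have "\<lceil>ln X / ln (1 / \<gamma>)\<rceil> \<le> int I" using I by simp
      then show ?thesis by (simp add: ceiling_le_iff)
    qed
    then have gX: "\<gamma> ^ I * X \<le> 1" by (rule gamma_bound[OF g01 X0])
    have "norm (c1 - wR) \<le> \<gamma> ^ I * d" using iter[of I] c1 by simp
    also have "\<dots> \<le> \<gamma> ^ I * (L / (real n * lam))" using dL g01 by (intro mult_left_mono) auto
    also have "L / (real n * lam) = X * (\<sigma> * b_eps_delta \<epsilon> \<delta>)" unfolding X_def using \<sigma> bpos by simp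
    also have "\<gamma> ^ I * (X * (\<sigma> * b_eps_delta \<epsilon> \<delta>)) = (\<gamma> ^ I * X) * (\<sigma> * b_eps_delta \<epsilon> \<delta>)" by simp
    also have "\<dots> \<le> 1 * (\<sigma> * b_eps_delta \<epsilon> \<delta>)" using gX \<sigma> bpos by (intro mult_right_mono) auto
    finally show ?thesis by simp
  qed
  have sets: "sets (gauss_output \<sigma> c) = sets borel" for c :: 'a unfolding gauss_output_def by simp
  show ?thesis
    unfolding indistinguishable_def c1_def[symmetric]
  proof (intro conjI ballI)
    show "sets (gauss_output \<sigma> c1) = sets (gauss_output \<sigma> wR)" by (simp add: sets)
    fix A assume "A \<in> sets (gauss_output \<sigma> c1)"
    then have A: "A \<in> sets borel" by (simp add: sets)
    show "measure (gauss_output \<sigma> c1) A \<le> exp \<epsilon> * measure (gauss_output \<sigma> wR) A + \<delta>"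
      by (rule gauss_mech[OF \<sigma> \<epsilon>(1) \<delta> close A])
    have close': "norm (wR - c1) \<le> \<sigma> * b_eps_delta \<epsilon> \<delta>" using close by (simp add: norm_minus_commute)
    show "measure (gauss_output \<sigma> wR) A \<le> exp \<epsilon> * measure (gauss_output \<sigma> c1) A + \<delta>"
      by (rule gauss_mech[OF \<sigma> \<epsilon>(1) \<delta> close' A])
  qed
qed


end
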